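(* Let $\mathscr T=(V,\mathcal E)$ be the directed Cartesian product of rooted directed trees $\mathscr T_1,\dots,\mathscr T_d$, let $S_{\boldsymbol\lambda}=(S_1,\dots,S_d)$ be a commuting multishift on $\mathscr T$ and let $E=\bigcap_j\ker S_j^*$. Then $$\bigvee_{j=1}^d\bigoplus_{v\in D_j}\Big(l^2(\mathsf{Chi}_j(v))\ominus[\Gamma^{(j)}_v]\Big)\oplus[e_{\mathsf{root}}]\ \subseteq\ E\ \subseteq\ \bigvee\{e_v:v\in F_1\times\dots\times F_d\},$$ where $D_j=\{v\in V:v_j\in V^{(j)}_\prec,\ v_i=\mathsf{root}_i\text{ for }i\ne j\}$, $\Gamma^{(j)}_v:\mathsf{Chi}_j(v)\to\mathbb C$ is $\Gamma^{(j)}_v(u)=\lambda^{(j)}_u$, and $F_j=\mathsf{Chi}(V^{(j)}_\prec)\cup\{\mathsf{root}_j\}$.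
   Context: Directed trees: no loops or circuits, connected ignoring orientation, unique parent $\mathsf{par}(v)$ for vertices with incoming edges; rooted: unique parentless vertex $\mathsf{root}$; $\mathsf{Chi}(u)=\{v:(u,v)\in\mathcal E\}$, $\mathsf{Chi}(W)=\bigcup_{u\in W}\mathsf{Chi}(u)$; all leafless. $V^{(j)}_\prec=\{u\in V_j:\mathrm{card}\,\mathsf{Chi}(u)\ge2\}$. Directed Cartesian product of rooted trees $\mathscr T_j=(V_j,\mathcal E_j)$: $V=V_1\times\dots\times V_d$ (countably infinite), $(v,w)\in\mathcal E$ iff for some $k$, $(v_k,w_k)\in\mathcal E_k$ and $w_j=v_j$ ($j\ne k$); $\mathsf{root}=(\mathsf{root}_j)$. $\mathsf{Chi}_j(v)=\{w:w_j\in\mathsf{Chi}(v_j),w_k=v_k\ (k\ne j)\}$. Multishift: positive weights, $S_je_v=\sum_{w\in\mathsf{Chi}_j(v)}\lambda^{(j)}_we_w$, each $S_j$ bounded on $l^2(V)$. $l^2(W)$ for $W\subseteq V$ is viewed as a subspace of $l^2(V)$; $[x]$ is the span of $x$; $\bigvee$ is closed linear span. *)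

theory Defs
  imports "HOL-Analysis.Analysis"
begin

definition children :: "('a \<times> 'a) set \<Rightarrow> 'a \<Rightarrow> 'a set" where
  "children E u = {v. (u, v) \<in> E}"

definition children_set :: "('a \<times> 'a) set \<Rightarrow> 'a set \<Rightarrow> 'a set" where
  "children_set E W = (\<Union>u\<in>W. children E u)"

definition has_circuit :: "('a \<times> 'a) set \<Rightarrow> bool" where
  "has_circuit E \<longleftrightarrow> (\<exists>xs. distinct xs \<and> length xs \<ge> 2 \<and>
      (\<forall>i < length xs. (xs ! i, xs ! (Suc i mod length xs)) \<in> E))"

definition directed_tree :: "'a set \<Rightarrow> ('a \<times> 'a) set \<Rightarrow> bool" where
  "directed_tree V E \<longleftrightarrow> V \<noteq> {} \<and> E \<subseteq> V \<times> V
     \<and> (\<forall>u. (u, u) \<notin> E)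
     \<and> \<not> has_circuit E
     \<and> (\<forall>u\<in>V. \<forall>v\<in>V. (u, v) \<in> (E \<union> E\<inverse>)\<^sup>*)
     \<and> (\<forall>v\<in>V. (\<exists>u. (u, v) \<in> E) \<longrightarrow> (\<exists>!u. (u, v) \<in> E))"

definition rooted_directed_tree :: "'a set \<Rightarrow> ('a \<times> 'a) set \<Rightarrow> bool" where
  "rooted_directed_tree V E \<longleftrightarrow> directed_tree V E \<and> (\<exists>!r. r \<in> V \<and> (\<nexists>u. (u, r) \<in> E))"

definition leafless :: "'a set \<Rightarrow> ('a \<times> 'a) set \<Rightarrow> bool" where
  "leafless V E \<longleftrightarrow> (\<forall>u\<in>V. children E u \<noteq> {})"

definition tree_root :: "'a set \<Rightarrow> ('a \<times> 'a) set \<Rightarrow> 'a" where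
  "tree_root V E = (THE r. r \<in> V \<and> (\<nexists>u. (u, r) \<in> E))"

definition parent :: "('a \<times> 'a) set \<Rightarrow> 'a \<Rightarrow> 'a" where
  "parent E v = (THE u. (u, v) \<in> E)"

text \<open>V_prec: vertices with at least two children (cardinality in the sense of
  cardinal numbers, so infinitely many children count).\<close>
definition branching :: "'a set \<Rightarrow> ('a \<times> 'a) set \<Rightarrow> 'a set" where
  "branching V E = {u \<in> V. infinite (children E u) \<or> card (children E u) \<ge> 2}"

definition prod_vertices :: "nat \<Rightarrow> (nat \<Rightarrow> 'a set) \<Rightarrow> (nat \<Rightarrow> 'a) set" where
  "prod_vertices d V = PiE {..<d} V"

definition prod_root :: "nat \<Rightarrow> (nat \<Rightarrow> 'a set) \<Rightarrow> (nat \<Rightarrow> ('a \<times> 'a) set) \<Rightarrow> nat \<Rightarrow> 'a" where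
  "prod_root d V E = restrict (\<lambda>j. tree_root (V j) (E j)) {..<d}"

definition children_j :: "nat \<Rightarrow> (nat \<Rightarrow> 'a set) \<Rightarrow> (nat \<Rightarrow> ('a \<times> 'a) set) \<Rightarrow> nat
    \<Rightarrow> (nat \<Rightarrow> 'a) \<Rightarrow> (nat \<Rightarrow> 'a) set" where
  "children_j d V E j v = {w \<in> prod_vertices d V. w j \<in> children (E j) (v j) \<and>
       (\<forall>k. k \<noteq> j \<longrightarrow> w k = v k)}"

definition l2 :: "'v set \<Rightarrow> ('v \<Rightarrow> complex) set" where
  "l2 X = {f. (\<forall>v. v \<notin> X \<longrightarrow> f v = 0) \<and> (\<lambda>v. (cmod (f v))\<^sup>2) summable_on X}"

text \<open>l^2(W) viewed as a subspace of l^2(X)\<close>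
definition l2_sub :: "'v set \<Rightarrow> 'v set \<Rightarrow> ('v \<Rightarrow> complex) set" where
  "l2_sub X W = {f \<in> l2 X. \<forall>v. v \<notin> W \<longrightarrow> f v = 0}"

definition l2_inner :: "'v set \<Rightarrow> ('v \<Rightarrow> complex) \<Rightarrow> ('v \<Rightarrow> complex) \<Rightarrow> complex" where
  "l2_inner X f g = (\<Sum>\<^sub>\<infinity>v\<in>X. f v * cnj (g v))"

definition l2_norm :: "'v set \<Rightarrow> ('v \<Rightarrow> complex) \<Rightarrow> real" where
  "l2_norm X f = sqrt (\<Sum>\<^sub>\<infinity>v\<in>X. (cmod (f v))\<^sup>2)"

definition basis_vec :: "'v \<Rightarrow> 'v \<Rightarrow> complex" where
  "basis_vec v = (\<lambda>w. if w = v then 1 else 0)"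

definition cspan :: "('v \<Rightarrow> complex) set \<Rightarrow> ('v \<Rightarrow> complex) set" where
  "cspan A = {f. \<exists>S c. finite S \<and> S \<subseteq> A \<and> f = (\<lambda>v. \<Sum>a\<in>S. c a * a v)}"

definition l2_closure :: "'v set \<Rightarrow> ('v \<Rightarrow> complex) set \<Rightarrow> ('v \<Rightarrow> complex) set" where
  "l2_closure X A = {f \<in> l2 X. \<forall>\<epsilon>>0. \<exists>g\<in>A. l2_norm X (\<lambda>v. f v - g v) < \<epsilon>}"

definition closed_span :: "'v set \<Rightarrow> ('v \<Rightarrow> complex) set \<Rightarrow> ('v \<Rightarrow> complex) set" where
  "closed_span X A = l2_closure X (cspan A)"

definition line_span :: "('v \<Rightarrow> complex) \<Rightarrow> ('v \<Rightarrow> complex) set" where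
  "line_span x = {(\<lambda>v. c * x v) | c. True}"

definition ortho_diff :: "'v set \<Rightarrow> ('v \<Rightarrow> complex) set \<Rightarrow> ('v \<Rightarrow> complex) set \<Rightarrow> ('v \<Rightarrow> complex) set" where
  "ortho_diff X M N = {f \<in> M. \<forall>g\<in>N. l2_inner X f g = 0}"

text \<open>Orthogonal sum of a family of (mutually orthogonal) closed subspaces:
  the closed linear span of their union.\<close>
definition osum :: "'v set \<Rightarrow> 'i set \<Rightarrow> ('i \<Rightarrow> ('v \<Rightarrow> complex) set) \<Rightarrow> ('v \<Rightarrow> complex) set" where
  "osum X I M = closed_span X (\<Union>i\<in>I. M i)"

definition oplus2 :: "'v set \<Rightarrow> ('v \<Rightarrow> complex) set \<Rightarrow> ('v \<Rightarrow> complex) set \<Rightarrow> ('v \<Rightarrow> complex) set" where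
  "oplus2 X A B = closed_span X (A \<union> B)"

text \<open>S_j e_v = sum over w in Chi_j(v) of lambda^(j)_w e_w, i.e.
  (S_j f)(w) = lambda^(j)_w f(par_j w) if w_j is not the root of T_j, and 0 otherwise.\<close>
definition mshift :: "nat \<Rightarrow> (nat \<Rightarrow> 'a set) \<Rightarrow> (nat \<Rightarrow> ('a \<times> 'a) set)
    \<Rightarrow> (nat \<Rightarrow> (nat \<Rightarrow> 'a) \<Rightarrow> real) \<Rightarrow> nat \<Rightarrow> ((nat \<Rightarrow> 'a) \<Rightarrow> complex) \<Rightarrow> (nat \<Rightarrow> 'a) \<Rightarrow> complex" where
  "mshift d V E lam j f = (\<lambda>w. if w \<in> prod_vertices d V \<and> w j \<noteq> tree_root (V j) (E j)
       then complex_of_real (lam j w) * f (w(j := parent (E j) (w j))) else 0)"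

text \<open>ker T^* = {x. T^* x = 0} = {x. for all y, <x, T y> = 0}\<close>
definition ker_adj :: "'v set \<Rightarrow> (('v \<Rightarrow> complex) \<Rightarrow> ('v \<Rightarrow> complex)) \<Rightarrow> ('v \<Rightarrow> complex) set" where
  "ker_adj X T = {x \<in> l2 X. \<forall>y\<in>l2 X. l2_inner X x (T y) = 0}"

definition bounded_on_l2 :: "'v set \<Rightarrow> (('v \<Rightarrow> complex) \<Rightarrow> ('v \<Rightarrow> complex)) \<Rightarrow> bool" where
  "bounded_on_l2 X T \<longleftrightarrow> (\<forall>f\<in>l2 X. T f \<in> l2 X) \<and> (\<exists>C. \<forall>f\<in>l2 X. l2_norm X (T f) \<le> C * l2_norm X f)"

end

theory Submission
  imports Defs
begin

lemma summable_on_sum_fin: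
  fixes f :: "'b \<Rightarrow> 'v \<Rightarrow> complex"
  assumes "finite S" "\<And>a. a \<in> S \<Longrightarrow> f a summable_on X"
  shows "(\<lambda>v. \<Sum>a\<in>S. f a v) summable_on X"
  using assms
proof (induction S rule: finite_induct)
  case empty then show ?case by simp
next
  case (insert x F)
  then show ?case by (simp add: summable_on_add)
qed

lemma infsum_sum_fin:
  fixes f :: "'b \<Rightarrow> 'v \<Rightarrow> complex"
  assumes "finite S" "\<And>a. a \<in> S \<Longrightarrow> f a summable_on X"
  shows "infsum (\<lambda>v. \<Sum>a\<in>S. f a v) X = (\<Sum>a\<in>S. infsum (f a) X)"
  using assms
proof (induction S rule: finite_induct)
  case empty then show ?case by simp
next
  case (insert x F)
  have "infsum (\<lambda>v. \<Sum>a\<in>insert x F. f a v) X = infsum (\<lambda>v. f x v + (\<Sum>a\<in>F. f a v)) X"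
    using insert by simp
  also have "\<dots> = infsum (f x) X + infsum (\<lambda>v. \<Sum>a\<in>F. f a v) X"
  proof (rule infsum_add)
    show "f x summable_on X" using insert.prems by simp
    show "(\<lambda>v. \<Sum>a\<in>F. f a v) summable_on X" by (rule summable_on_sum_fin) (use insert in auto)
  qed
  finally show ?case using insert by simp
qed

lemma sq_add_le: "(cmod (a + b))\<^sup>2 \<le> 2 * (cmod a)\<^sup>2 + 2 * (cmod b)\<^sup>2"
proof -
  have "cmod (a+b) \<le> cmod a + cmod b" by (rule norm_triangle_ineq)
  hence "(cmod (a+b))\<^sup>2 \<le> (cmod a + cmod b)\<^sup>2" by (simp add: power_mono)
  also have "\<dots> \<le> 2 * (cmod a)\<^sup>2 + 2 * (cmod b)\<^sup>2"
  proof -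
    have "0 \<le> (cmod a - cmod b)\<^sup>2" by simp
    thus ?thesis unfolding power2_sum power2_diff by linarith
  qed
  finally show ?thesis .
qed

lemma l2_zero: "(\<lambda>v. 0) \<in> l2 X" by (simp add: l2_def)

lemma l2_add:
  assumes "f \<in> l2 X" "g \<in> l2 X"
  shows "(\<lambda>v. f v + g v) \<in> l2 X"
proof -
  have "(\<lambda>v. 2 * (cmod (f v))\<^sup>2 + 2 * (cmod (g v))\<^sup>2) summable_on X"
    using assms unfolding l2_def
    by (intro summable_on_add summable_on_cmult_right) auto
  hence "(\<lambda>v. (cmod (f v + g v))\<^sup>2) summable_on X"
    by (rule summable_on_comparison_test) (auto simp: sq_add_le)
  thus ?thesis using assms by (auto simp: l2_def)
qed

lemma l2_scale:
  assumes "f \<in> l2 X"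
  shows "(\<lambda>v. c * f v) \<in> l2 X"
proof -
  have "(\<lambda>v. (cmod c)\<^sup>2 * (cmod (f v))\<^sup>2) summable_on X"
    using assms unfolding l2_def by (intro summable_on_cmult_right) auto
  thus ?thesis using assms by (auto simp: l2_def norm_mult power_mult_distrib)
qed

lemma l2_diff:
  assumes "f \<in> l2 X" "g \<in> l2 X"
  shows "(\<lambda>v. f v - g v) \<in> l2 X"
  using l2_add[OF assms(1) l2_scale[OF assms(2), of "-1"]] by simp

lemma l2_sum:
  assumes "finite S" "\<And>a. a \<in> S \<Longrightarrow> a \<in> l2 X"
  shows "(\<lambda>v. \<Sum>a\<in>S. c a * a v) \<in> l2 X"
  using assms
proof (induction S rule: finite_induct)
  case empty then show ?case by (simp add: l2_zero)
next
  case (insert x F)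
  then show ?case using l2_add[OF l2_scale[of x X "c x"]] by simp
qed

lemma ab_le: "2 * (a::real) * b \<le> t * a\<^sup>2 + b\<^sup>2 / t" if "t > 0" for t
proof -
  have "0 \<le> (t * a - b)\<^sup>2 / t" using that by simp
  also have "(t * a - b)\<^sup>2 / t = t * a\<^sup>2 + b\<^sup>2 / t - 2 * a * b"
    using that by (simp add: power2_diff field_simps power2_eq_square)
  finally show ?thesis by simp
qed

lemma l2_prod_abs:
  assumes "f \<in> l2 X" "g \<in> l2 X"
  shows "(\<lambda>v. norm (f v * cnj (g v))) summable_on X"
proof -
  have "(\<lambda>v. (1/2) * ((cmod (f v))\<^sup>2 + (cmod (g v))\<^sup>2)) summable_on X"
    using assms unfolding l2_def by (intro summable_on_cmult_right summable_on_add) auto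
  moreover have "norm (f v * cnj (g v)) \<le> (1/2) * ((cmod (f v))\<^sup>2 + (cmod (g v))\<^sup>2)" for v
    using ab_le[of 1 "cmod (f v)" "cmod (g v)"] by (simp add: norm_mult)
  ultimately show ?thesis
    by (rule summable_on_comparison_test) auto
qed

lemma l2_prod_summable:
  assumes "f \<in> l2 X" "g \<in> l2 X"
  shows "(\<lambda>v. f v * cnj (g v)) summable_on X"
  by (rule abs_summable_summable[OF l2_prod_abs[OF assms]])

lemma l2_inner_bound:
  assumes "f \<in> l2 X" "g \<in> l2 X" "t > 0"
  shows "2 * cmod (l2_inner X f g) \<le> t * (\<Sum>\<^sub>\<infinity>v\<in>X. (cmod (f v))\<^sup>2) + inverse t * (\<Sum>\<^sub>\<infinity>v\<in>X. (cmod (g v))\<^sup>2)"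
proof -
  have sf: "(\<lambda>v. (cmod (f v))\<^sup>2) summable_on X" and sg: "(\<lambda>v. (cmod (g v))\<^sup>2) summable_on X"
    using assms unfolding l2_def by auto
  have sn: "(\<lambda>v. norm (f v * cnj (g v))) summable_on X" by (rule l2_prod_abs[OF assms(1,2)])
  have "cmod (l2_inner X f g) \<le> (\<Sum>\<^sub>\<infinity>v\<in>X. norm (f v * cnj (g v)))"
    unfolding l2_inner_def by (rule norm_infsum_bound[OF sn])
  hence "2 * cmod (l2_inner X f g) \<le> 2 * (\<Sum>\<^sub>\<infinity>v\<in>X. norm (f v * cnj (g v)))" by simp
  also have "\<dots> = (\<Sum>\<^sub>\<infinity>v\<in>X. 2 * norm (f v * cnj (g v)))"
    by (rule infsum_cmult_right'[symmetric])
  also have "\<dots> \<le> (\<Sum>\<^sub>\<infinity>v\<in>X. t * (cmod (f v))\<^sup>2 + inverse t * (cmod (g v))\<^sup>2)"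
  proof (rule infsum_mono)
    show "(\<lambda>v. 2 * norm (f v * cnj (g v))) summable_on X" by (rule summable_on_cmult_right[OF sn])
    show "(\<lambda>v. t * (cmod (f v))\<^sup>2 + inverse t * (cmod (g v))\<^sup>2) summable_on X"
      by (rule summable_on_add[OF summable_on_cmult_right[OF sf] summable_on_cmult_right[OF sg]])
    fix v
    have "2 * cmod (f v) * cmod (g v) \<le> t * (cmod (f v))\<^sup>2 + (cmod (g v))\<^sup>2 / t"
      by (rule ab_le[OF assms(3)])
    thus "2 * norm (f v * cnj (g v)) \<le> t * (cmod (f v))\<^sup>2 + inverse t * (cmod (g v))\<^sup>2"
      unfolding norm_mult complex_mod_cnj by (simp add: divide_inverse algebra_simps)
  qed
  also have "\<dots> = t * (\<Sum>\<^sub>\<infinity>v\<in>X. (cmod (f v))\<^sup>2) + inverse t * (\<Sum>\<^sub>\<infinity>v\<in>X. (cmod (g v))\<^sup>2)"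
    by (simp add: infsum_add[OF summable_on_cmult_right[OF sf] summable_on_cmult_right[OF sg]] infsum_cmult_right')
  finally show ?thesis .
qed

lemma cspan_ker:
  assumes T: "\<forall>y\<in>l2 X. T y \<in> l2 X" and A: "A \<subseteq> ker_adj X T"
  shows "cspan A \<subseteq> ker_adj X T"
proof
  fix g assume "g \<in> cspan A"
  then obtain S c where S: "finite S" "S \<subseteq> A" and g: "g = (\<lambda>v. \<Sum>a\<in>S. c a * a v)"
    unfolding cspan_def by blast
  have Sl2: "a \<in> l2 X" if "a \<in> S" for a using that S A unfolding ker_adj_def by auto
  have gl2: "g \<in> l2 X" unfolding g by (rule l2_sum[OF S(1) Sl2])
  have "l2_inner X g (T y) = 0" if y: "y \<in> l2 X" for y
  proof -
    have k: "T y \<in> l2 X" using T y by auto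
    have "l2_inner X g (T y) = infsum (\<lambda>v. \<Sum>a\<in>S. c a * (a v * cnj (T y v))) X"
      unfolding l2_inner_def g by (simp add: sum_distrib_right mult.assoc)
    also have "\<dots> = (\<Sum>a\<in>S. infsum (\<lambda>v. c a * (a v * cnj (T y v))) X)"
      by (rule infsum_sum_fin[OF S(1)]) (intro summable_on_cmult_right l2_prod_summable[OF Sl2 k]; simp)
    also have "\<dots> = (\<Sum>a\<in>S. c a * l2_inner X a (T y))"
      unfolding l2_inner_def by (simp add: infsum_cmult_right')
    also have "\<dots> = 0"
      using S A y by (intro sum.neutral) (auto simp: ker_adj_def)
    finally show ?thesis .
  qed
  thus "g \<in> ker_adj X T" using gl2 unfolding ker_adj_def by auto
qed

lemma closed_span_ker:
  assumes T: "\<forall>y\<in>l2 X. T y \<in> l2 X" and A: "A \<subseteq> ker_adj X T"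
  shows "closed_span X A \<subseteq> ker_adj X T"
proof
  fix f assume "f \<in> closed_span X A"
  hence fl2: "f \<in> l2 X" and app: "\<And>e. e > 0 \<Longrightarrow> \<exists>g\<in>cspan A. l2_norm X (\<lambda>v. f v - g v) < e"
    unfolding closed_span_def l2_closure_def by auto
  have "l2_inner X f (T y) = 0" if y: "y \<in> l2 X" for y
  proof -
    have k: "T y \<in> l2 X" using T y by auto
    define Nk where "Nk = (\<Sum>\<^sub>\<infinity>v\<in>X. (cmod (T y v))\<^sup>2)"
    have Nk0: "Nk \<ge> 0" unfolding Nk_def by (rule infsum_nonneg) simp
    define I where "I = l2_inner X f (T y)"
    have bnd: "2 * cmod I \<le> e * (1 + Nk)" if e: "e > 0" for e
    proof -
      obtain g where g: "g \<in> cspan A" and gn: "l2_norm X (\<lambda>v. f v - g v) < e" using app[OF e] by blast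
      have gk: "g \<in> ker_adj X T" using cspan_ker[OF T A] g by auto
      hence gl2: "g \<in> l2 X" and g0: "l2_inner X g (T y) = 0" using y unfolding ker_adj_def by auto
      define h where "h = (\<lambda>v. f v - g v)"
      have hl2: "h \<in> l2 X" unfolding h_def by (rule l2_diff[OF fl2 gl2])
      have "I = infsum (\<lambda>v. h v * cnj (T y v) + g v * cnj (T y v)) X"
        unfolding I_def l2_inner_def h_def by (simp add: algebra_simps)
      also have "\<dots> = l2_inner X h (T y) + l2_inner X g (T y)"
        unfolding l2_inner_def by (rule infsum_add[OF l2_prod_summable[OF hl2 k] l2_prod_summable[OF gl2 k]])
      finally have I: "I = l2_inner X h (T y)" using g0 by simp
      define Nh where "Nh = (\<Sum>\<^sub>\<infinity>v\<in>X. (cmod (h v))\<^sup>2)"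
      have Nh0: "Nh \<ge> 0" unfolding Nh_def by (rule infsum_nonneg) simp
      have "sqrt Nh < e" using gn unfolding l2_norm_def Nh_def h_def .
      hence "Nh < e\<^sup>2" using Nh0 e by (metis real_sqrt_less_iff real_sqrt_abs abs_of_pos) 
      have "2 * cmod I \<le> inverse e * Nh + inverse (inverse e) * Nk"
        unfolding I Nh_def Nk_def by (rule l2_inner_bound[OF hl2 k]) (use e in simp)
      also have "\<dots> \<le> inverse e * e\<^sup>2 + e * Nk"
        using \<open>Nh < e\<^sup>2\<close> e by (simp add: mult_left_mono)
      also have "\<dots> = e * (1 + Nk)" using e by (simp add: power2_eq_square field_simps)
      finally show ?thesis .
    qed
    have "cmod I = 0"
    proof (rule ccontr)
      assume "cmod I \<noteq> 0"
      hence pos: "cmod I > 0" by simp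
      have "2 * cmod I \<le> (cmod I / (1 + Nk)) * (1 + Nk)" by (rule bnd) (use pos Nk0 in simp)
      also have "\<dots> = cmod I" using Nk0 by simp
      finally show False using pos by simp
    qed
    thus ?thesis unfolding I_def by simp
  qed
  thus "f \<in> ker_adj X T" using fl2 unfolding ker_adj_def by auto
qed

lemma tr_root:
  assumes "rooted_directed_tree V E"
  shows "tree_root V E \<in> V \<and> (\<nexists>u. (u, tree_root V E) \<in> E)"
proof -
  have "\<exists>!r. r \<in> V \<and> (\<nexists>u. (u, r) \<in> E)" using assms unfolding rooted_directed_tree_def by blast
  thus ?thesis unfolding tree_root_def by (rule theI')
qed

lemma tr_nonroot:
  assumes "rooted_directed_tree V E" "v \<in> V" "v \<noteq> tree_root V E"
  shows "\<exists>u. (u, v) \<in> E"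
proof (rule ccontr)
  assume a: "\<nexists>u. (u, v) \<in> E"
  have "\<exists>!r. r \<in> V \<and> (\<nexists>u. (u, r) \<in> E)" using assms unfolding rooted_directed_tree_def by blast
  with a tr_root[OF assms(1)] assms(2,3) show False by blast
qed

lemma tr_edge:
  assumes "rooted_directed_tree V E" "(u, v) \<in> E"
  shows "u \<in> V" "v \<in> V"
  using assms unfolding rooted_directed_tree_def directed_tree_def by auto

lemma tr_parent:
  assumes "rooted_directed_tree V E" "(u, v) \<in> E"
  shows "parent E v = u"
proof -
  have "v \<in> V" using tr_edge[OF assms] by simp
  hence "\<exists>!u. (u, v) \<in> E" using assms unfolding rooted_directed_tree_def directed_tree_def by blast
  thus ?thesis unfolding parent_def using assms(2) by (rule the1_equality)
qed

lemma tr_child_nonroot: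
  assumes "rooted_directed_tree V E" "(u, v) \<in> E"
  shows "v \<noteq> tree_root V E"
  using tr_root[OF assms(1)] assms(2) by blast

lemma l2_finsupp:
  assumes "finite F" "\<And>v. v \<notin> F \<Longrightarrow> h v = 0"
  shows "h summable_on X"
proof -
  have "h summable_on (X \<inter> F)" using assms(1) by simp
  moreover have "h summable_on (X \<inter> F) \<longleftrightarrow> h summable_on X"
    by (rule summable_on_cong_neutral) (use assms(2) in auto)
  ultimately show ?thesis by simp
qed

lemma basis_l2:
  assumes "v \<in> X" shows "basis_vec v \<in> l2 X"
  unfolding l2_def using assms
  by (auto simp: basis_vec_def split: if_splits intro!: l2_finsupp[where F="{v}"])

lemma approx_basis:
  assumes x: "x \<in> l2 X" and z: "\<And>w. w \<notin> P \<Longrightarrow> x w = 0"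
  shows "x \<in> closed_span X {basis_vec v | v. v \<in> P}"
  unfolding closed_span_def l2_closure_def
proof (intro CollectI conjI allI impI x)
  fix e :: real assume e: "e > 0"
  define h where "h = (\<lambda>v. (cmod (x v))\<^sup>2)"
  have hs: "h summable_on X" using x unfolding l2_def h_def by auto
  obtain S where S: "finite S" "S \<subseteq> X" and dS: "dist (sum h S) (infsum h X) \<le> e\<^sup>2 / 2"
    using infsum_finite_approximation[OF hs, of "e\<^sup>2/2"] e by auto
  define S0 where "S0 = S \<inter> P"
  have fS0: "finite S0" using S unfolding S0_def by simp
  define g where "g = (\<lambda>v. if v \<in> S0 then x v else 0)"
  have injb: "inj_on basis_vec S0"
    by (rule inj_onI) (metis basis_vec_def zero_neq_one)
  define c where "c = (\<lambda>a. x (inv_into S0 basis_vec a))"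
  have "g = (\<lambda>v. \<Sum>a\<in>basis_vec ` S0. c a * a v)"
  proof
    fix v
    have "(\<Sum>a\<in>basis_vec ` S0. c a * a v) = (\<Sum>u\<in>S0. c (basis_vec u) * basis_vec u v)"
      by (rule sum.reindex[OF injb, unfolded comp_def])
    also have "\<dots> = (\<Sum>u\<in>S0. if u = v then x u else 0)"
    proof (rule sum.cong)
      fix u assume u: "u \<in> S0"
      have "c (basis_vec u) = x u" using u by (simp add: c_def inv_into_f_f[OF injb])
      thus "c (basis_vec u) * basis_vec u v = (if u = v then x u else 0)" by (simp add: basis_vec_def)
    qed simp
    also have "\<dots> = g v" using fS0 by (simp add: g_def)
    finally show "g v = (\<Sum>a\<in>basis_vec ` S0. c a * a v)" by simp
  qed
  hence gc: "g \<in> cspan {basis_vec v | v. v \<in> P}"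
    unfolding cspan_def using fS0 by (auto simp: S0_def)
  have "(\<Sum>\<^sub>\<infinity>v\<in>X. (cmod (x v - g v))\<^sup>2) = infsum h (X - S)"
    by (rule infsum_cong_neutral) (auto simp: g_def h_def S0_def z)
  also have "\<dots> = infsum h X - infsum h S"
    by (rule infsum_Diff[OF hs _ S(2)]) (use S in simp)
  also have "\<dots> = infsum h X - sum h S" using S by simp
  also have "\<dots> \<le> e\<^sup>2 / 2" using dS unfolding dist_real_def by linarith
  also have "\<dots> < e\<^sup>2" using e by simp
  finally have "(\<Sum>\<^sub>\<infinity>v\<in>X. (cmod (x v - g v))\<^sup>2) < e\<^sup>2" .
  hence "l2_norm X (\<lambda>v. x v - g v) < e"
    unfolding l2_norm_def using e by (simp add: real_sqrt_less_iff real_less_lsqrt)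
  thus "\<exists>g\<in>cspan {basis_vec v | v. v \<in> P}. l2_norm X (\<lambda>v. x v - g v) < e" using gc by blast
qed

lemma infsum_single:
  fixes a :: complex
  assumes "w \<in> X" shows "infsum (\<lambda>u. if u = w then a else 0) X = a"
proof -
  have "infsum (\<lambda>u. if u = w then a else 0) X = infsum (\<lambda>u. if u = w then a else 0) {w}"
    by (rule infsum_cong_neutral) (use assms in auto)
  thus ?thesis by simp
qed

theorem mainTheorem15:
  fixes d :: nat
    and V :: "nat \<Rightarrow> 'a set"
    and E :: "nat \<Rightarrow> ('a \<times> 'a) set"
    and lam :: "nat \<Rightarrow> (nat \<Rightarrow> 'a) \<Rightarrow> real"
  assumes d_pos: "d \<ge> 1"
    and trees: "\<forall>j<d. rooted_directed_tree (V j) (E j) \<and> leafless (V j) (E j) \<and> countable (V j)"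
    and weights_pos: "\<forall>j<d. \<forall>w\<in>prod_vertices d V. w j \<noteq> tree_root (V j) (E j) \<longrightarrow> lam j w > 0"
    and bounded: "\<forall>j<d. bounded_on_l2 (prod_vertices d V) (mshift d V E lam j)"
    and commuting: "\<forall>i<d. \<forall>j<d. \<forall>f\<in>l2 (prod_vertices d V).
        mshift d V E lam i (mshift d V E lam j f) = mshift d V E lam j (mshift d V E lam i f)"
  shows
   "let X = prod_vertices d V;
        rt = prod_root d V E;
        Ek = (\<Inter>j\<in>{..<d}. ker_adj X (mshift d V E lam j));
        D = (\<lambda>j. {v \<in> X. v j \<in> branching (V j) (E j) \<and>
                          (\<forall>i<d. i \<noteq> j \<longrightarrow> v i = tree_root (V i) (E i))});
        Gamma = (\<lambda>j v u. if u \<in> children_j d V E j v then complex_of_real (lam j u) else 0);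
        F = (\<lambda>j. children_set (E j) (branching (V j) (E j)) \<union> {tree_root (V j) (E j)});
        LHS = oplus2 X
                (closed_span X (\<Union>j\<in>{..<d}.
                   osum X (D j) (\<lambda>v. ortho_diff X (l2_sub X (children_j d V E j v))
                                                  (line_span (Gamma j v)))))
                (line_span (basis_vec rt));
        RHS = closed_span X {basis_vec v | v. v \<in> PiE {..<d} F}
    in LHS \<subseteq> Ek \<and> Ek \<subseteq> RHS"
proof -
  define X where "X = prod_vertices d V"
  define Ek where "Ek = (\<Inter>j\<in>{..<d}. ker_adj X (mshift d V E lam j))"
  define rt where "rt = prod_root d V E"
  have tr: "\<And>j. j < d \<Longrightarrow> rooted_directed_tree (V j) (E j)" using trees by auto
  have Tl2: "\<And>j. j < d \<Longrightarrow> \<forall>y\<in>l2 X. mshift d V E lam j y \<in> l2 X"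
    using bounded unfolding bounded_on_l2_def X_def by auto
  have csEk: "closed_span X A \<subseteq> Ek" if A: "A \<subseteq> Ek" for A
    unfolding Ek_def
  proof (rule INT_greatest)
    fix j assume j: "j \<in> {..<d}"
    show "closed_span X A \<subseteq> ker_adj X (mshift d V E lam j)"
      by (rule closed_span_ker[OF Tl2]) (use A j in \<open>auto simp: Ek_def\<close>)
  qed
  have Xmem: "w \<in> X \<longleftrightarrow> (\<forall>i<d. w i \<in> V i) \<and> (\<forall>i. i \<ge> d \<longrightarrow> w i = undefined)" for w
    unfolding X_def prod_vertices_def PiE_iff extensional_def by auto
  have od: "f \<in> Ek"
    if j: "j < d" and vD: "\<forall>i<d. i \<noteq> j \<longrightarrow> v i = tree_root (V i) (E i)"
      and f: "f \<in> ortho_diff X (l2_sub X (children_j d V E j v))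
                 (line_span (\<lambda>u. if u \<in> children_j d V E j v then complex_of_real (lam j u) else 0))"
    for j v f
  proof -
    define G where "G = (\<lambda>u. if u \<in> children_j d V E j v then complex_of_real (lam j u) else 0)"
    have Gl: "G \<in> line_span G" unfolding line_span_def by (rule CollectI, intro exI[of _ 1]) simp
    have fl2: "f \<in> l2 X" and fz: "\<And>w. w \<notin> children_j d V E j v \<Longrightarrow> f w = 0"
      and fo: "l2_inner X f G = 0"
      using f Gl unfolding ortho_diff_def l2_sub_def G_def by auto
    have "f \<in> ker_adj X (mshift d V E lam i)" if i: "i < d" for i
    proof -
      have "l2_inner X f (mshift d V E lam i y) = 0" if y: "y \<in> l2 X" for y
      proof -
        have pw: "f w * cnj (mshift d V E lam i y w) = (if i = j then cnj (y v) * (f w * cnj (G w)) else 0)" for w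
        proof (cases "w \<in> children_j d V E j v")
          case True
          hence wX: "w \<in> prod_vertices d V" and ed: "(v j, w j) \<in> E j" and wk: "\<And>k. k \<noteq> j \<Longrightarrow> w k = v k"
            unfolding children_j_def children_def by auto
          show ?thesis
          proof (cases "i = j")
            case True
            have nr: "w j \<noteq> tree_root (V j) (E j)" by (rule tr_child_nonroot[OF tr[OF j] ed])
            have par: "parent (E j) (w j) = v j" by (rule tr_parent[OF tr[OF j] ed])
            have wv: "w(j := v j) = v" using wk by (auto intro!: ext)
            have "mshift d V E lam i y w = complex_of_real (lam j w) * y v"
              unfolding mshift_def using True wX nr par wv by simp
            moreover have "G w = complex_of_real (lam j w)" unfolding G_def using \<open>w \<in> children_j d V E j v\<close> by simp
            ultimately show ?thesis using True by simp
          next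
            case False
            have "w i = tree_root (V i) (E i)" using wk[OF False] vD i False by auto
            hence "mshift d V E lam i y w = 0" unfolding mshift_def by simp
            thus ?thesis using False by simp
          qed
        next
          case False
          thus ?thesis using fz[OF False] by simp
        qed
        show ?thesis
        proof (cases "i = j")
          case True
          have "l2_inner X f (mshift d V E lam i y) = infsum (\<lambda>w. cnj (y v) * (f w * cnj (G w))) X"
            unfolding l2_inner_def pw using True by simp
          also have "\<dots> = cnj (y v) * l2_inner X f G" unfolding l2_inner_def by (rule infsum_cmult_right')
          finally show ?thesis using fo by simp
        next
          case False
          show ?thesis unfolding l2_inner_def pw using False by simp
        qed
      qed
      thus ?thesis using fl2 unfolding ker_adj_def by auto
    qed
    thus ?thesis unfolding Ek_def by auto
  qed
  have rti: "\<And>i. i < d \<Longrightarrow> rt i = tree_root (V i) (E i)" unfolding rt_def prod_root_def by simp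
  have rtX: "rt \<in> X"
    unfolding Xmem using rti tr_root[OF tr] by (auto simp: rt_def prod_root_def)
  have rtE: "line_span (basis_vec rt) \<subseteq> Ek"
  proof
    fix x assume "x \<in> line_span (basis_vec rt)"
    then obtain c where x: "x = (\<lambda>w. c * basis_vec rt w)" unfolding line_span_def by auto
    have xl2: "x \<in> l2 X" unfolding x by (rule l2_scale[OF basis_l2[OF rtX]])
    have "x \<in> ker_adj X (mshift d V E lam i)" if i: "i < d" for i
    proof -
      have "x w * cnj (mshift d V E lam i y w) = 0" for y w
        using rti[OF i] unfolding x basis_vec_def mshift_def by auto
      hence "\<And>y. (\<lambda>w. x w * cnj (mshift d V E lam i y w)) = (\<lambda>w. 0)" by (intro ext)
      thus ?thesis using xl2 unfolding ker_adj_def l2_inner_def by simp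
    qed
    thus "x \<in> Ek" unfolding Ek_def by auto
  qed
  have L: "closed_span X (closed_span X (\<Union>j\<in>{..<d}. closed_span X (\<Union>v\<in>{v \<in> X. v j \<in> branching (V j) (E j) \<and>
                          (\<forall>i<d. i \<noteq> j \<longrightarrow> v i = tree_root (V i) (E i))}.
          ortho_diff X (l2_sub X (children_j d V E j v))
                 (line_span (\<lambda>u. if u \<in> children_j d V E j v then complex_of_real (lam j u) else 0))))
         \<union> line_span (basis_vec rt)) \<subseteq> Ek"
    apply (rule csEk)
    apply (rule Un_least[OF csEk rtE])
    apply (rule UN_least)
    apply (rule csEk)
    apply (rule UN_least)
    using od by blast
  define F where "F = (\<lambda>j. children_set (E j) (branching (V j) (E j)) \<union> {tree_root (V j) (E j)})"
  have R: "Ek \<subseteq> closed_span X {basis_vec v | v. v \<in> PiE {..<d} F}"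
  proof
    fix x assume xE: "x \<in> Ek"
    have "0 \<in> {..<d}" using d_pos by simp
    hence xl2: "x \<in> l2 X" using xE unfolding Ek_def ker_adj_def by blast
    have xk: "\<And>j y. j < d \<Longrightarrow> y \<in> l2 X \<Longrightarrow> l2_inner X x (mshift d V E lam j y) = 0"
      using xE unfolding Ek_def ker_adj_def by auto
    show "x \<in> closed_span X {basis_vec v | v. v \<in> PiE {..<d} F}"
    proof (rule approx_basis[OF xl2])
      fix w assume wP: "w \<notin> PiE {..<d} F"
      show "x w = 0"
      proof (cases "w \<in> X")
        case False thus ?thesis using xl2 unfolding l2_def by auto
      next
        case wX: True
        obtain j where j: "j < d" and wF: "w j \<notin> F j"
          using wP wX unfolding Xmem PiE_iff extensional_def by auto
        have trj: "rooted_directed_tree (V j) (E j)" by (rule tr[OF j])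
        have wV: "w j \<in> V j" using wX j unfolding Xmem by auto
        have nr: "w j \<noteq> tree_root (V j) (E j)" using wF unfolding F_def by auto
        obtain p where pe: "(p, w j) \<in> E j" using tr_nonroot[OF trj wV nr] by blast
        have pV: "p \<in> V j" by (rule tr_edge(1)[OF trj pe])
        have pnb: "p \<notin> branching (V j) (E j)"
          using wF pe unfolding F_def children_set_def children_def by auto
        have finc: "finite (children (E j) p)" and cc: "card (children (E j) p) < 2"
          using pnb pV unfolding branching_def by auto
        have uniq: "u = w j" if "(p, u) \<in> E j" for u
        proof (rule ccontr)
          assume "u \<noteq> w j"
          hence "card {u, w j} = 2" by simp
          moreover have "card {u, w j} \<le> card (children (E j) p)"
            by (rule card_mono[OF finc]) (use that pe in \<open>auto simp: children_def\<close>)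
          ultimately show False using cc by simp
        qed
        define w' where "w' = w(j := p)"
        have w'X: "w' \<in> X" using wX pV j unfolding Xmem w'_def by auto
        have parw: "parent (E j) (w j) = p" by (rule tr_parent[OF trj pe])
        have sh: "mshift d V E lam j (basis_vec w') = (\<lambda>u. if u = w then complex_of_real (lam j w) else 0)"
        proof
          fix u
          show "mshift d V E lam j (basis_vec w') u = (if u = w then complex_of_real (lam j w) else 0)"
          proof (cases "u = w")
            case True
            thus ?thesis using wX nr parw unfolding mshift_def basis_vec_def w'_def X_def by simp
          next
            case False
            have "\<not> (u \<in> prod_vertices d V \<and> u j \<noteq> tree_root (V j) (E j) \<and> u(j := parent (E j) (u j)) = w')"
            proof
              assume a: "u \<in> prod_vertices d V \<and> u j \<noteq> tree_root (V j) (E j) \<and> u(j := parent (E j) (u j)) = w'"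
              have uV: "u j \<in> V j" using a j unfolding X_def[symmetric] Xmem by auto
              obtain q where qe: "(q, u j) \<in> E j" using tr_nonroot[OF trj uV] a by blast
              have "parent (E j) (u j) = q" by (rule tr_parent[OF trj qe])
              moreover have "parent (E j) (u j) = p"
                using fun_cong[OF conjunct2[OF conjunct2[OF a]], of j] unfolding w'_def by simp
              ultimately have "(p, u j) \<in> E j" using qe by simp
              hence "u j = w j" by (rule uniq)
              moreover have "u k = w k" if "k \<noteq> j" for k
                using fun_cong[OF conjunct2[OF conjunct2[OF a]], of k] that unfolding w'_def by simp
              ultimately have "u = w" by (metis ext)
              thus False using False by simp
            qed
            thus ?thesis using False unfolding mshift_def basis_vec_def by auto
          qed
        qed
        have "l2_inner X x (mshift d V E lam j (basis_vec w')) = infsum (\<lambda>u. if u = w then x w * complex_of_real (lam j w) else 0) X"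
          unfolding l2_inner_def sh by (rule infsum_cong) auto
        also have "\<dots> = x w * complex_of_real (lam j w)" by (rule infsum_single[OF wX])
        finally have "x w * complex_of_real (lam j w) = 0" using xk[OF j basis_l2[OF w'X]] by simp
        moreover have "lam j w > 0" using weights_pos j wX nr unfolding X_def by auto
        ultimately show ?thesis by simp
      qed
    qed
  qed
  show ?thesis
    unfolding Let_def oplus2_def osum_def X_def[symmetric] rt_def[symmetric] F_def[symmetric] Ek_def[symmetric]
    using L R by blast
qed

end
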